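(* Let $M\subset E^2$ be a centrally symmetric convex body with center of symmetry $o$. For every triangle $\Delta$ inscribed in $M$ (i.e. with all vertices in the boundary of $M$) whose centroid is $o$, we have $M\subset 3\Delta$, where $3\Delta$ denotes the image of $\Delta$ under the homothety with center $o$ and ratio $3$.
   Context: A convex body is a compact convex set with nonempty interior. The centroid of a triangle is the average of its three vertices. *)

theory Defs
  imports "HOL-Analysis.Analysis"
begin

definition convex_body :: "(real^2) set \<Rightarrow> bool" where
  "convex_body M \<longleftrightarrow> compact M \<and> convex M \<and> interior M \<noteq> {}"

definition centrally_symmetric_about :: "(real^2) set \<Rightarrow> real^2 \<Rightarrow> bool" where
  "centrally_symmetric_about M z \<longleftrightarrow> (\<forall>x\<in>M. 2 *\<^sub>R z - x \<in> M)"

definition homothety :: "real^2 \<Rightarrow> real \<Rightarrow> real^2 \<Rightarrow> real^2" where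
  "homothety c r x = c + r *\<^sub>R (x - c)"

end

theory Submission
  imports Defs
begin

lemma support_at:
  fixes M :: "(real^2) set"
  assumes "convex M" "closed M" "interior M \<noteq> {}" "p \<in> frontier M"
  shows "\<exists>d. d \<noteq> 0 \<and> (\<forall>y\<in>M. d \<bullet> (y - z) \<le> d \<bullet> (p - z))"
proof -
  have "p \<in> closure M" "p \<notin> rel_interior M"
    using assms by (auto simp: frontier_def rel_interior_nonempty_interior)
  then obtain e where e: "e \<noteq> 0" "\<And>y. y \<in> closure M \<Longrightarrow> e \<bullet> p \<le> e \<bullet> y"
    using supporting_hyperplane_relative_frontier[OF assms(1)] by metis
  show ?thesis
  proof (intro exI conjI ballI)
    show "- e \<noteq> 0" using e by simp
    fix y assume "y \<in> M"
    then have "e \<bullet> p \<le> e \<bullet> y" using e(2) closure_subset by blast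
    then show "(- e) \<bullet> (y - z) \<le> (- e) \<bullet> (p - z)" by (simp add: inner_diff_right)
  qed
qed

lemma key:
  fixes M :: "(real^2) set" and z a b c x :: "real^2" and s t :: real
  assumes cvx: "convex M" and cl: "closed M" and int: "interior M \<noteq> {}"
    and sym: "\<forall>y\<in>M. 2 *\<^sub>R z - y \<in> M"
    and fa: "a \<in> frontier M" and fb: "b \<in> frontier M" and fc: "c \<in> frontier M"
    and sum: "a + b + c = 3 *\<^sub>R z"
    and ind: "\<And>d. d \<bullet> (a - z) = 0 \<Longrightarrow> d \<bullet> (b - z) = 0 \<Longrightarrow> d = 0"
    and xM: "x \<in> M" and xe: "x - z = s *\<^sub>R (a - z) + t *\<^sub>R (b - z)"
  shows "2 * s - t \<ge> -3"
proof (rule ccontr)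
  assume H: "\<not> 2 * s - t \<ge> -3"
  have fM: "frontier M \<subseteq> M" using cl by (simp add: frontier_subset_closed)
  have aM: "a \<in> M" and bM: "b \<in> M" and cM: "c \<in> M" using fa fb fc fM by auto
  have ce: "c - z = - (a - z) - (b - z)" using sum
    by (simp add: algebra_simps scaleR_2 vec_eq_iff)
  have refl: "\<And>d q. d \<bullet> ((2 *\<^sub>R z - q) - z) = - (d \<bullet> (q - z))"
    by (simp add: inner_diff_right scaleR_2 inner_add_right)
  have dc: "\<And>d. d \<bullet> (c - z) = - (d \<bullet> (a - z)) - d \<bullet> (b - z)"
    unfolding ce by (simp only: inner_diff_right inner_minus_right)
  have dx: "\<And>d. d \<bullet> (x - z) = s * (d \<bullet> (a - z)) + t * (d \<bullet> (b - z))"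
    using xe by (simp add: inner_add_right)
  have ra: "2 *\<^sub>R z - a \<in> M" and rb: "2 *\<^sub>R z - b \<in> M" and rc: "2 *\<^sub>R z - c \<in> M"
    and rx: "2 *\<^sub>R z - x \<in> M" using sym aM bM cM xM by auto
  consider "s + 1 < 0 \<and> s - t + 1 < 0" | "t - s \<le> 1" | "s \<ge> -1" by linarith
  then show False
  proof cases
    case 1
    obtain d where d: "d \<noteq> 0" "\<forall>y\<in>M. d \<bullet> (y - z) \<le> d \<bullet> (a - z)"
      using support_at[OF cvx cl int fa] by blast
    define A where "A = d \<bullet> (a - z)"
    define B where "B = d \<bullet> (b - z)"
    have i1: "- B \<le> A" using d(2) rb refl[of d b] unfolding A_def B_def by fastforce
    have i2: "A + B \<le> A" using d(2) rc refl[of d c] dc[of d] unfolding A_def B_def by fastforce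
    have i3: "- (s * A + t * B) \<le> A" using d(2) rx refl[of d x] dx[of d] unfolding A_def B_def by fastforce
    have "A \<noteq> 0"
    proof
      assume "A = 0"
      then have "B = 0" using i1 i2 by linarith
      then show False using ind[of d] d(1) \<open>A = 0\<close> unfolding A_def B_def by blast
    qed
    define p where "p = - B"
    define q where "q = A + B"
    have p0: "p \<ge> 0" "q \<ge> 0" "p + q > 0" using i1 i2 \<open>A \<noteq> 0\<close> unfolding p_def q_def by auto
    have "(s - t + 1) * p + (s + 1) * q \<ge> 0" using i3 unfolding p_def q_def by (simp add: algebra_simps)
    moreover have "(s - t + 1) * p \<le> 0" using 1 p0 by (simp add: mult_nonpos_nonneg)
    moreover have "(s + 1) * q \<le> 0" using 1 p0 by (simp add: mult_nonpos_nonneg)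
    moreover have "(s - t + 1) * p < 0 \<or> (s + 1) * q < 0"
      using 1 p0 by (metis add.right_neutral less_eq_real_def mult_neg_pos)
    ultimately show False by linarith
  next
    case 2
    obtain d where d: "d \<noteq> 0" "\<forall>y\<in>M. d \<bullet> (y - z) \<le> d \<bullet> (c - z)"
      using support_at[OF cvx cl int fc] by blast
    define A where "A = d \<bullet> (a - z)"
    define B where "B = d \<bullet> (b - z)"
    have i1: "- A \<le> - A - B" using d(2) ra refl[of d a] dc[of d] unfolding A_def B_def by fastforce
    have i2: "- B \<le> - A - B" using d(2) rb refl[of d b] dc[of d] unfolding A_def B_def by fastforce
    have i3: "s * A + t * B \<le> - A - B" using d(2) xM dx[of d] dc[of d] unfolding A_def B_def by fastforce
    have "A \<noteq> 0 \<or> B \<noteq> 0" using ind[of d] d(1) unfolding A_def B_def by blast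
    define P where "P = - A"
    define Q where "Q = - B"
    have p0: "P \<ge> 0" "Q \<ge> 0" "P + Q > 0" using i1 i2 \<open>A \<noteq> 0 \<or> B \<noteq> 0\<close> unfolding P_def Q_def by auto
    have st: "s + 1 < 0" "t + 1 < 0" using 2 H by linarith+
    have "(s + 1) * P + (t + 1) * Q \<ge> 0" using i3 unfolding P_def Q_def by (simp add: algebra_simps)
    moreover have "(s + 1) * P \<le> 0" using st p0 by (simp add: mult_nonpos_nonneg)
    moreover have "(t + 1) * Q \<le> 0" using st p0 by (simp add: mult_nonpos_nonneg)
    moreover have "(s + 1) * P < 0 \<or> (t + 1) * Q < 0"
      using st p0 by (metis add.right_neutral less_eq_real_def mult_neg_pos)
    ultimately show False by linarith
  next
    case 3
    obtain d where d: "d \<noteq> 0" "\<forall>y\<in>M. d \<bullet> (y - z) \<le> d \<bullet> (b - z)"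
      using support_at[OF cvx cl int fb] by blast
    define A where "A = d \<bullet> (a - z)"
    define B where "B = d \<bullet> (b - z)"
    have i1: "- A \<le> B" using d(2) ra refl[of d a] unfolding A_def B_def by fastforce
    have i2: "A + B \<le> B" using d(2) rc refl[of d c] dc[of d] unfolding A_def B_def by fastforce
    have i3: "s * A + t * B \<le> B" using d(2) xM dx[of d] unfolding A_def B_def by fastforce
    have "A \<noteq> 0 \<or> B \<noteq> 0" using ind[of d] d(1) unfolding A_def B_def by blast
    define P where "P = - A"
    define R where "R = B + A"
    have p0: "P \<ge> 0" "R \<ge> 0" "P + R > 0" using i1 i2 \<open>A \<noteq> 0 \<or> B \<noteq> 0\<close> unfolding P_def R_def by auto
    have st: "t - 1 - s > 0" "t - 1 > 0" using 3 H by linarith+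
    have "(t - 1 - s) * P + (t - 1) * R \<le> 0" using i3 unfolding P_def R_def by (simp add: algebra_simps)
    moreover have "(t - 1 - s) * P \<ge> 0" using st p0 by simp
    moreover have "(t - 1) * R \<ge> 0" using st p0 by simp
    moreover have "(t - 1 - s) * P > 0 \<or> (t - 1) * R > 0"
      using st p0 by (metis add.right_neutral less_eq_real_def mult_pos_pos)
    ultimately show False by linarith
  qed
qed

lemma inner2: "(d::real^2) \<bullet> u = d$1 * u$1 + d$2 * u$2"
  by (simp add: inner_vec_def sum_2)

lemma det_nz:
  fixes u v :: "real^2"
  assumes ind: "\<And>d. d \<bullet> u = 0 \<Longrightarrow> d \<bullet> v = 0 \<Longrightarrow> d = 0"
  shows "u$1 * v$2 - u$2 * v$1 \<noteq> 0"
proof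
  assume h: "u$1 * v$2 - u$2 * v$1 = 0"
  have "vector [-(u$2), u$1] = (0::real^2)"
    by (rule ind) (use h in \<open>simp_all add: inner2 algebra_simps\<close>)
  then have u0: "u$1 = 0" "u$2 = 0" by (metis neg_equal_0_iff_equal vector_2 zero_index)+
  have "vector [-(v$2), v$1] = (0::real^2)"
    by (rule ind) (use u0 in \<open>simp_all add: inner2 algebra_simps\<close>)
  then have v0: "v$1 = 0" "v$2 = 0" by (metis neg_equal_0_iff_equal vector_2 zero_index)+
  have "vector [1, 0] = (0::real^2)"
    by (rule ind) (use u0 v0 in \<open>simp_all add: inner2\<close>)
  then show False by (metis vector_2(1) zero_index zero_neq_one)
qed

theorem mainTheorem2:
  fixes M :: "(real^2) set" and z a b c :: "real^2"
  assumes "convex_body M"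
    and "centrally_symmetric_about M z"
    and "a \<in> frontier M" and "b \<in> frontier M" and "c \<in> frontier M"
    and "\<not> collinear {a, b, c}"
    and "(1/3) *\<^sub>R (a + b + c) = z"
  shows "M \<subseteq> homothety z 3 ` (convex hull {a, b, c})"
proof
  fix x assume xM: "x \<in> M"
  have cvx: "convex M" and cl: "closed M" and int: "interior M \<noteq> {}"
    using assms(1) unfolding convex_body_def by (auto simp: compact_imp_closed)
  have sym: "\<forall>y\<in>M. 2 *\<^sub>R z - y \<in> M" using assms(2) unfolding centrally_symmetric_about_def .
  have sum: "a + b + c = 3 *\<^sub>R z" using assms(7) by (auto simp: vec_eq_iff)
  define u where "u = a - z"
  define v where "v = b - z"
  define w where "w = x - z"
  have ce: "c - z = - u - v" using sum unfolding u_def v_def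
    by (simp add: algebra_simps scaleR_2 vec_eq_iff)
  have dc: "\<And>d. d \<bullet> (c - z) = - (d \<bullet> u) - d \<bullet> v"
    unfolding ce by (simp only: inner_diff_right inner_minus_right)
  have ind: "d = 0" if h1: "d \<bullet> u = 0" and h2: "d \<bullet> v = 0" for d
  proof (rule ccontr)
    assume dn: "d \<noteq> 0"
    have h3: "d \<bullet> (c - z) = 0" using dc h1 h2 by simp
    have "{a, b, c} \<subseteq> {y. d \<bullet> y = d \<bullet> z}"
      using h1 h2 h3 unfolding u_def v_def by (auto simp: inner_diff_right)
    then have "aff_dim {a, b, c} \<le> aff_dim {y. d \<bullet> y = d \<bullet> z}" by (rule aff_dim_subset)
    also have "\<dots> = 1" using dn by simp
    finally show False using assms(6) collinear_aff_dim by blast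
  qed
  have ind1: "\<And>d. d \<bullet> (a - z) = 0 \<Longrightarrow> d \<bullet> (b - z) = 0 \<Longrightarrow> d = 0"
    using ind unfolding u_def v_def by blast
  have ind2: "\<And>d. d \<bullet> (b - z) = 0 \<Longrightarrow> d \<bullet> (c - z) = 0 \<Longrightarrow> d = 0"
    using ind dc unfolding u_def v_def by force
  have ind3: "\<And>d. d \<bullet> (c - z) = 0 \<Longrightarrow> d \<bullet> (a - z) = 0 \<Longrightarrow> d = 0"
    using ind dc unfolding u_def v_def by force
  define D where "D = u$1 * v$2 - u$2 * v$1"
  have Dnz: "D \<noteq> 0" unfolding D_def by (rule det_nz) (use ind in blast)
  define s where "s = (w$1 * v$2 - w$2 * v$1) / D"
  define t where "t = (u$1 * w$2 - u$2 * w$1) / D"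
  have we: "w = s *\<^sub>R u + t *\<^sub>R v"
  proof -
    have sD: "s * D = w$1 * v$2 - w$2 * v$1" unfolding s_def using Dnz by simp
    have tD: "t * D = u$1 * w$2 - u$2 * w$1" unfolding t_def using Dnz by simp
    have "(s * u$1 + t * v$1) * D = (s * D) * u$1 + (t * D) * v$1" by (simp add: algebra_simps)
    also have "\<dots> = w$1 * D" unfolding sD tD by (simp add: D_def algebra_simps)
    finally have "(s * u$1 + t * v$1) * D = w$1 * D" .
    then have 1: "s * u$1 + t * v$1 = w$1" using Dnz by simp
    have "(s * u$2 + t * v$2) * D = (s * D) * u$2 + (t * D) * v$2" by (simp add: algebra_simps)
    also have "\<dots> = w$2 * D" unfolding sD tD by (simp add: D_def algebra_simps)
    finally have "(s * u$2 + t * v$2) * D = w$2 * D" .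
    then have 2: "s * u$2 + t * v$2 = w$2" using Dnz by simp
    show ?thesis using 1 2 by (simp add: vec_eq_iff forall_2)
  qed
  have sum3: "a + b + c = 3 *\<^sub>R z" by (rule sum)
  have sum2: "b + c + a = 3 *\<^sub>R z" using sum by (simp add: algebra_simps)
  have sum1: "c + a + b = 3 *\<^sub>R z" using sum by (simp add: algebra_simps)
  have e1: "x - z = s *\<^sub>R (a - z) + t *\<^sub>R (b - z)" using we unfolding w_def u_def v_def .
  have e2: "x - z = (t - s) *\<^sub>R (b - z) + (- s) *\<^sub>R (c - z)"
    unfolding ce w_def[symmetric] u_def[symmetric] v_def[symmetric] we by (simp add: algebra_simps)
  have e3: "x - z = (- t) *\<^sub>R (c - z) + (s - t) *\<^sub>R (a - z)"
    unfolding ce w_def[symmetric] u_def[symmetric] v_def[symmetric] we by (simp add: algebra_simps)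
  have k1: "2 * s - t \<ge> -3"
    by (rule key[OF cvx cl int sym assms(3,4,5) sum3 ind1 xM e1])
  have k2: "2 * (t - s) - (- s) \<ge> -3"
    by (rule key[OF cvx cl int sym assms(4,5,3) sum2 ind2 xM e2])
  have k3: "2 * (- t) - (s - t) \<ge> -3"
    by (rule key[OF cvx cl int sym assms(5,3,4) sum1 ind3 xM e3])
  define l where "l = (3 + 2 * s - t) / 9"
  define m where "m = (3 + 2 * t - s) / 9"
  define n where "n = (3 - s - t) / 9"
  define y where "y = z + (1/3) *\<^sub>R w"
  have "y = l *\<^sub>R a + m *\<^sub>R b + n *\<^sub>R c"
  proof -
    have a': "a = z + u" and b': "b = z + v" and c': "c = z - u - v"
      using ce unfolding u_def v_def by (auto simp: algebra_simps)
    show ?thesis unfolding y_def a' b' c' we l_def m_def n_def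
      by (simp add: vec_eq_iff forall_2 field_simps)
  qed
  moreover have "l \<ge> 0" "m \<ge> 0" "n \<ge> 0" "l + m + n = 1"
    using k1 k2 k3 unfolding l_def m_def n_def by (auto simp: field_simps)
  ultimately have "y \<in> convex hull {a, b, c}" unfolding convex_hull_3 by blast
  moreover have "x = homothety z 3 y"
    unfolding homothety_def y_def w_def by (simp add: algebra_simps)
  ultimately show "x \<in> homothety z 3 ` (convex hull {a, b, c})" by blast
qed

end
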